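(* Let $d\geqslant 5$ be an integer and let $r$ be an integer with $\gcd(d,r)=1$. Let $a\geqslant 1$ be an integer and $n=ad-r$, and assume $n\geqslant r$. Suppose that $2r+kd\equiv 0\pmod{n}$ for some integer $k>0$. Then $k\geqslant a(d-4)/2$. *)

theory Defs
  imports "HOL-Number_Theory.Number_Theory"
begin

end

theory Submission
  imports Defs
begin

theorem lemma1:
  fixes d r a n k :: int
  assumes "d \<ge> 5"
    and "gcd d r = 1"
    and "a \<ge> 1"
    and "n = a * d - r"
    and "n \<ge> r"
    and "k > 0"
    and "[2 * r + k * d = 0] (mod n)"
  shows "real_of_int k \<ge> real_of_int (a * (d - 4)) / 2"
proof -
  have "1 * 5 \<le> a * d" using assms(1,3) by (intro mult_mono) auto
  hence ad: "a * d \<ge> 5" by simp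
  have npos: "n > 0" using assms(4,5) ad by linarith
  have "n dvd (2 * r + k * d)" using assms(7) by (simp add: cong_0_iff)
  then obtain m where m: "2 * r + k * d = n * m" by (elim dvdE)
  have e1: "(m + 2) * r = d * (m * a - k)" using m assms(4) by (simp add: algebra_simps)
  have "coprime d r" using assms(2) by (simp add: coprime_iff_gcd_eq_1)
  moreover have "d dvd (m + 2) * r" using e1 by simp
  ultimately have "d dvd (m + 2)" by (simp add: coprime_dvd_mult_left_iff)
  then obtain j where j: "m + 2 = d * j" by (elim dvdE)
  have "d * (j * r) = d * (m * a - k)" using e1 j by (simp add: algebra_simps)
  hence "j * r = m * a - k" using assms(1) by simp
  hence "k = (d * j - 2) * a - j * r" using j by (metis add_diff_cancel_right' diff_diff_eq2 add_diff_cancel_left' mult.commute)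
  moreover have "j * n = j * (a * d) - j * r" using assms(4) by (simp add: right_diff_distrib)
  moreover have "j * (a * d) = (d * j) * a" by (simp add: ac_simps)
  ultimately have kj: "k = j * n - 2 * a" by (simp add: left_diff_distrib)
  have "j \<ge> 1"
  proof (rule ccontr)
    assume "\<not> j \<ge> 1"
    hence "j * n \<le> 0" using npos by (simp add: mult_nonpos_nonneg)
    thus False using kj assms(3,6) by linarith
  qed
  hence "j * n \<ge> n" using npos by simp
  hence "2 * k \<ge> a * (d - 4)" using kj assms(4,5) by (simp add: algebra_simps)
  hence "real_of_int (2 * k) \<ge> real_of_int (a * (d - 4))" by linarith
  thus ?thesis by simp
qed

end
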